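(* Let $\mathbf{b}\in H_{1,2,2}$ be primary. If $\mathbf{b}-1\in I$, then $\overline{\mathbf{b}}$ is primary. If $\mathbf{b}-(1+2\mathbf{v}_3)\in I$, then $-\overline{\mathbf{b}}$ is primary.
   Context: Let $\mathbf{i},\mathbf{j},\mathbf{k}$ be the standard quaternion units; $\overline{\mathbf{q}}=q_1-q_2\mathbf{i}-q_3\mathbf{j}-q_4\mathbf{k}$ is the conjugate of $\mathbf{q}=q_1+q_2\mathbf{i}+q_3\mathbf{j}+q_4\mathbf{k}$. $H_{1,2,2}$ is the subring of the quaternions equal to the $\mathbb{Z}$-module generated by $\mathbf{v}_1=1$, $\mathbf{v}_2=\mathbf{i}$, $\mathbf{v}_3=\tfrac12(1+\mathbf{i}+\sqrt2\,\mathbf{j})$, $\mathbf{v}_4=\tfrac12(1+\mathbf{i}+\sqrt2\,\mathbf{k})$, closed under conjugation. Let $I = 2(1+\mathbf{i})H_{1,2,2}$ (equal to $H_{1,2,2}\,2(1+\mathbf{i})$). An element $\mathbf{q}\in H_{1,2,2}$ is primary if $\mathbf{q}-1\in I$ or $\mathbf{q}-(1+2\mathbf{v}_3)\in I$. *)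

theory Defs
  imports Complex_Main
begin

datatype quat = Quat (re: real) (im_i: real) (im_j: real) (im_k: real)

definition qadd :: "quat \<Rightarrow> quat \<Rightarrow> quat" where
  "qadd p q = Quat (re p + re q) (im_i p + im_i q) (im_j p + im_j q) (im_k p + im_k q)"

definition qneg :: "quat \<Rightarrow> quat" where
  "qneg q = Quat (- re q) (- im_i q) (- im_j q) (- im_k q)"

definition qsub :: "quat \<Rightarrow> quat \<Rightarrow> quat" where
  "qsub p q = qadd p (qneg q)"

definition qmul :: "quat \<Rightarrow> quat \<Rightarrow> quat" where
  "qmul p q = Quat
     (re p * re q - im_i p * im_i q - im_j p * im_j q - im_k p * im_k q)
     (re p * im_i q + im_i p * re q + im_j p * im_k q - im_k p * im_j q)
     (re p * im_j q - im_i p * im_k q + im_j p * re q + im_k p * im_i q)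
     (re p * im_k q + im_i p * im_j q - im_j p * im_i q + im_k p * re q)"

definition qcnj :: "quat \<Rightarrow> quat" where
  "qcnj q = Quat (re q) (- im_i q) (- im_j q) (- im_k q)"

definition qscale :: "int \<Rightarrow> quat \<Rightarrow> quat" where
  "qscale n q = Quat (of_int n * re q) (of_int n * im_i q) (of_int n * im_j q) (of_int n * im_k q)"

definition q1 :: quat where "q1 = Quat 1 0 0 0"
definition qi :: quat where "qi = Quat 0 1 0 0"

definition v1 :: quat where "v1 = q1"
definition v2 :: quat where "v2 = qi"
definition v3 :: quat where "v3 = Quat (1/2) (1/2) (sqrt 2 / 2) 0"
definition v4 :: quat where "v4 = Quat (1/2) (1/2) 0 (sqrt 2 / 2)"

definition H122 :: "quat set" where
  "H122 = {qadd (qadd (qscale a v1) (qscale b v2)) (qadd (qscale c v3) (qscale d v4))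
           | a b c d :: int. True}"

definition I122 :: "quat set" where
  "I122 = {qmul (qscale 2 (qadd q1 qi)) x | x. x \<in> H122}"

definition primary :: "quat \<Rightarrow> bool" where
  "primary q \<longleftrightarrow> q \<in> H122 \<and>
     (qsub q q1 \<in> I122 \<or> qsub q (qadd q1 (qscale 2 v3)) \<in> I122)"

end

theory Submission
  imports Defs
begin

definition hq :: "int \<Rightarrow> int \<Rightarrow> int \<Rightarrow> int \<Rightarrow> quat" where
  "hq a b c d = Quat (of_int a + of_int c/2 + of_int d/2) (of_int b + of_int c/2 + of_int d/2)
     (of_int c * sqrt 2/2) (of_int d * sqrt 2/2)"

lemma H_iff: "q \<in> H122 \<longleftrightarrow> (\<exists>a b c d. q = hq a b c d)"
  unfolding H122_def hq_def qadd_def qscale_def v1_def v2_def v3_def v4_def q1_def qi_def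
  by (auto simp: field_simps)

lemma I_iff: "q \<in> I122 \<longleftrightarrow> (\<exists>a b c d. q = qmul (Quat 2 2 0 0) (hq a b c d))"
proof -
  have "qscale 2 (qadd q1 qi) = Quat 2 2 0 0"
    by (simp add: qscale_def qadd_def q1_def qi_def)
  then show ?thesis unfolding I122_def H_iff by (simp only:) blast
qed

lemma s2: "sqrt 2 * sqrt 2 = (2::real)" by simp

lemma case1: "qcnj (qmul (Quat 2 2 0 0) (hq a b c d)) = qmul (Quat 2 2 0 0) (hq (-b) (-a) (-c) (-d))"
  by (simp add: qcnj_def qmul_def hq_def algebra_simps)

lemma case2: "qsub (qneg (qcnj (qadd (qadd q1 (qscale 2 v3)) (qmul (Quat 2 2 0 0) (hq a b c d)))))
     (qadd q1 (qscale 2 v3)) = qmul (Quat 2 2 0 0) (hq (b - 1) (a + 1) c d)"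
  by (simp add: qsub_def qneg_def qadd_def qcnj_def qmul_def hq_def q1_def qscale_def v3_def algebra_simps)

lemma addsub: "qadd y (qsub x y) = x"
  by (simp add: qadd_def qsub_def qneg_def)

lemma cnjsub1: "qsub (qcnj x) q1 = qcnj (qsub x q1)"
  by (simp add: qsub_def qcnj_def qadd_def qneg_def q1_def)

lemma cnjH: "x \<in> H122 \<Longrightarrow> qcnj x \<in> H122"
proof -
  assume "x \<in> H122"
  then obtain a b c d where "x = hq a b c d" by (auto simp: H_iff)
  then have "qcnj x = hq (a+c+d) (-b) (-c) (-d)"
    by (simp add: qcnj_def hq_def algebra_simps)
  then show ?thesis by (auto simp: H_iff)
qed

lemma negH: "x \<in> H122 \<Longrightarrow> qneg x \<in> H122"
proof -
  assume "x \<in> H122"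
  then obtain a b c d where "x = hq a b c d" by (auto simp: H_iff)
  then have "qneg x = hq (-a) (-b) (-c) (-d)"
    by (simp add: qneg_def hq_def algebra_simps)
  then show ?thesis by (auto simp: H_iff)
qed

theorem lemma16:
  fixes b :: quat
  assumes "b \<in> H122" and "primary b"
  shows "(qsub b q1 \<in> I122 \<longrightarrow> primary (qcnj b))
       \<and> (qsub b (qadd q1 (qscale 2 v3)) \<in> I122 \<longrightarrow> primary (qneg (qcnj b)))"
proof (intro conjI impI)
  assume "qsub b q1 \<in> I122"
  then obtain a1 b1 c1 d1 where e: "qsub b q1 = qmul (Quat 2 2 0 0) (hq a1 b1 c1 d1)"
    by (auto simp: I_iff)
  have "qsub (qcnj b) q1 \<in> I122"
    unfolding cnjsub1 e case1 I_iff by blast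
  then show "primary (qcnj b)" using cnjH[OF assms(1)] by (simp add: primary_def)
next
  assume "qsub b (qadd q1 (qscale 2 v3)) \<in> I122"
  then obtain a1 b1 c1 d1 where e: "qsub b (qadd q1 (qscale 2 v3)) = qmul (Quat 2 2 0 0) (hq a1 b1 c1 d1)"
    by (auto simp: I_iff)
  have bb: "b = qadd (qadd q1 (qscale 2 v3)) (qmul (Quat 2 2 0 0) (hq a1 b1 c1 d1))"
    using addsub[of "qadd q1 (qscale 2 v3)" b] e by simp
  have "qsub (qneg (qcnj b)) (qadd q1 (qscale 2 v3)) \<in> I122"
    unfolding I_iff by (subst bb, subst case2, blast)
  then show "primary (qneg (qcnj b))" using negH[OF cnjH[OF assms(1)]] by (simp add: primary_def)
qed

end
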